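(* Assume the standing assumptions (A). Let $\mathcal D=(X_{\mathcal D,0},\Pi_{\mathcal D},\nabla_{\mathcal D},Q_{\mathcal D})$ be a Gradient Discretisation with piecewise constant reconstruction, and let $u\in X_{\mathcal D,0}$ be a solution to the Gradient Scheme (GS). Then \[ \|\Pi_{\mathcal D} u\|_{L^2(\Omega)}+\|\Pi_{\mathcal D}\beta(u)\|_{L^2(\Omega)}+\|\nabla_{\mathcal D}\zeta(u)\|_{L^2(\Omega)^d}\le C\left(\|Q_{\mathcal D} f\|_{L^2(\Omega)}+\|F\|_{L^2(\Omega)^d}+1\right), \] where $C>0$ depends only on the data in (A) (i.e. $M_0,M_1,K_0,K_1,\underline\lambda,\overline\lambda$) and on an upper bound of $C_{\mathcal D}$.
   Context: Standing assumptions (A): $\Omega$ is an open bounded connected subset of $\mathbb{R}^d$; $\zeta:\mathbb{R}\to\mathbb{R}$ is continuous, non-decreasing, $\zeta(0)=0$ and there are $M_0,M_1>0$ with $|\zeta(s)|\ge M_0|s|-M_1$ for all $s$; $\beta:\mathbb{R}\to\mathbb{R}$ is continuous, non-decreasing, $\beta(0)=0$ and there are $K_0,K_1>0$ with $|\beta(s)|\le K_0|s|+K_1$ for all $s$; $\beta+\zeta$ is strictly increasing; $\Lambda:\Omega\to M_d(\mathbb{R})$ is measurable and there are $\overline\lambda\ge\underline\lambda>0$ such that for a.e. $x$, $\Lambda(x)$ is symmetric with eigenvalues in $[\underline\lambda,\overline\lambda]$; $f\in L^2(\Omega)$, $F\in L^2(\Omega)^d$. Gradient Discretisation (GD): $\mathcal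 D=(X_{\mathcal D,0},\Pi_{\mathcal D},\nabla_{\mathcal D},Q_{\mathcal D})$ where $X_{\mathcal D,0}$ is a finite-dimensional space, $\Pi_{\mathcal D}:X_{\mathcal D,0}\to L^2(\Omega)$ and $\nabla_{\mathcal D}:X_{\mathcal D,0}\to L^2(\Omega)^d$ are linear with $\|v\|_{\mathcal D}:=\|\nabla_{\mathcal D}v\|_{L^2}$ a norm on $X_{\mathcal D,0}$, and $Q_{\mathcal D}:L^2(\Omega)\to L^2(\Omega)$ is a (not necessarily linear or bounded) map called the quadrature operator. Piecewise constant reconstruction: there are finite sets $I_{\partial\Omega}\subset I$ with $X_{\mathcal D,0}=\{v=(v_i)_{i\in I}: v_i\in\mathbb{R},\ v_i=0\ \forall i\in I_{\partial\Omega}\}$ and a partition $(U_i)_{i\in I}$ of $\Omega$ (some $U_i$ possibly empty) with $\Pi_{\mathcal D}v=\sum_{i\in I}v_i\mathbf 1_{U_i}$. For $g:\mathbb{R}\to\mathbb{R}$ with $g(0)=0$, $g(v):=(g(v_i))_{i\in I}\in X_{\mathcal D,0}$ (so $\Pi_{\mathcal D}g(v)=g(\Pi_{\mathcal D}v)$). Gradient Scheme (GS): find $u\in X_{\mathcal D,0}$ such that for all $v\in X_{\mathcal D,0}$, $\int_\Omega\beta(\Pi_{\mathcal D}u)\Pi_{\mathcal D}v+\int_\Omega\Lambda\nabla_{\mathcal D}\zeta(u)\cdot\nabla_{\mathcal D}v=\int_\Omega Q_{\mathcal D}f\,\Pi_{\mathcal D}v-\int_\Omega F\cdot\nabla_{\mathcal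 D}v$. $C_{\mathcal D}:=\max_{v\in X_{\mathcal D,0}\setminus\{0\}}\|\Pi_{\mathcal D}v\|_{L^2}/\|\nabla_{\mathcal D}v\|_{L^2}$. *)

theory Defs
  imports "HOL-Analysis.Analysis"
begin

definition L2 :: "('a::euclidean_space) set \<Rightarrow> ('a \<Rightarrow> 'b::{real_normed_vector, second_countable_topology}) \<Rightarrow> bool" where
  "L2 \<Omega> g \<longleftrightarrow> g \<in> borel_measurable (lebesgue_on \<Omega>)
      \<and> integrable (lebesgue_on \<Omega>) (\<lambda>x. (norm (g x))\<^sup>2)"

definition L2norm :: "('a::euclidean_space) set \<Rightarrow> ('a \<Rightarrow> 'b::real_normed_vector) \<Rightarrow> real" where
  "L2norm \<Omega> g = sqrt (integral\<^sup>L (lebesgue_on \<Omega>) (\<lambda>x. (norm (g x))\<^sup>2))"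

text \<open>The discrete space X_{D,0}: families indexed by the finite set I (a set of naturals),
  vanishing on the boundary indices Ib (and, by convention, outside I).\<close>

definition XD :: "nat set \<Rightarrow> nat set \<Rightarrow> (nat \<Rightarrow> real) set" where
  "XD I Ib = {v. \<forall>i. (i \<notin> I \<or> i \<in> Ib) \<longrightarrow> v i = 0}"

definition PiD :: "nat set \<Rightarrow> (nat \<Rightarrow> 'a set) \<Rightarrow> (nat \<Rightarrow> real) \<Rightarrow> 'a \<Rightarrow> real" where
  "PiD I U v x = (\<Sum>i\<in>I. v i * indicator (U i) x)"

definition is_GD_pc ::
  "('a::euclidean_space) set \<Rightarrow> nat set \<Rightarrow> nat set \<Rightarrow> (nat \<Rightarrow> 'a set)
    \<Rightarrow> ((nat \<Rightarrow> real) \<Rightarrow> 'a \<Rightarrow> 'b::euclidean_space) \<Rightarrow> (('a \<Rightarrow> real) \<Rightarrow> ('a \<Rightarrow> real)) \<Rightarrow> bool" where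
  "is_GD_pc \<Omega> I Ib U Grad Q \<longleftrightarrow>
     finite I \<and> Ib \<subseteq> I
   \<and> (\<forall>i\<in>I. U i \<in> sets lebesgue \<and> U i \<subseteq> \<Omega>)
   \<and> disjoint_family_on U I \<and> (\<Union>i\<in>I. U i) = \<Omega>
   \<and> (\<forall>v\<in>XD I Ib. L2 \<Omega> (Grad v))
   \<and> (\<forall>v\<in>XD I Ib. \<forall>w\<in>XD I Ib. \<forall>a b::real.
        AE x in lebesgue_on \<Omega>. Grad (\<lambda>i. a * v i + b * w i) x = a *\<^sub>R Grad v x + b *\<^sub>R Grad w x)
   \<and> (\<forall>v\<in>XD I Ib. L2norm \<Omega> (Grad v) = 0 \<longrightarrow> (\<forall>i. v i = 0))
   \<and> (\<forall>g. L2 \<Omega> g \<longrightarrow> L2 \<Omega> (Q g))"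

definition CD :: "('a::euclidean_space) set \<Rightarrow> nat set \<Rightarrow> nat set \<Rightarrow> (nat \<Rightarrow> 'a set)
    \<Rightarrow> ((nat \<Rightarrow> real) \<Rightarrow> 'a \<Rightarrow> 'b::euclidean_space) \<Rightarrow> real" where
  "CD \<Omega> I Ib U Grad =
     Sup {L2norm \<Omega> (PiD I U v) / L2norm \<Omega> (Grad v) | v. v \<in> XD I Ib \<and> v \<noteq> (\<lambda>_. 0)}"

definition solves_GS ::
  "('a::euclidean_space) set \<Rightarrow> nat set \<Rightarrow> nat set \<Rightarrow> (nat \<Rightarrow> 'a set)
    \<Rightarrow> ((nat \<Rightarrow> real) \<Rightarrow> 'a \<Rightarrow> real^'n) \<Rightarrow> (('a \<Rightarrow> real) \<Rightarrow> ('a \<Rightarrow> real))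
    \<Rightarrow> (real \<Rightarrow> real) \<Rightarrow> (real \<Rightarrow> real) \<Rightarrow> ('a \<Rightarrow> real^'n^'n)
    \<Rightarrow> ('a \<Rightarrow> real) \<Rightarrow> ('a \<Rightarrow> real^'n) \<Rightarrow> (nat \<Rightarrow> real) \<Rightarrow> bool" where
  "solves_GS \<Omega> I Ib U Grad Q \<beta> \<zeta> \<Lambda> f F u \<longleftrightarrow>
     u \<in> XD I Ib \<and>
     (\<forall>v\<in>XD I Ib.
        (\<integral>x. \<beta> (PiD I U u x) * PiD I U v x \<partial>lebesgue_on \<Omega>)
      + (\<integral>x. (\<Lambda> x *v Grad (\<zeta> \<circ> u) x) \<bullet> Grad v x \<partial>lebesgue_on \<Omega>)
      = (\<integral>x. Q f x * PiD I U v x \<partial>lebesgue_on \<Omega>)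
      - (\<integral>x. F x \<bullet> Grad v x \<partial>lebesgue_on \<Omega>))"

end

theory Submission
  imports Defs
begin


lemma quad_zero_aux:
  fixes w c :: real
  assumes "\<forall>t. 0 \<le> 2*t*w + t^2*c" "c \<ge> 0"
  shows "w = 0"
proof -
  define t where "t = - w / (c+1)"
  have tc: "t * (c+1) = - w" unfolding t_def using assms(2) by simp
  have X: "0 \<le> 2*t*w + t^2*c" using assms by blast
  have "(c+1)^2 * (2*t*w + t^2*c) = 2*(t*(c+1))*w*(c+1) + (t*(c+1))^2*c"
    by (simp add: power2_eq_square algebra_simps)
  also have "\<dots> = - (w^2 * (c+2))" unfolding tc by (simp add: power2_eq_square algebra_simps)
  finally have "0 \<le> - (w^2 * (c+2))" using X by (metis mult_nonneg_nonneg zero_le_power2)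
  then have "w^2 * (c+2) \<le> 0" by simp
  then have "w^2 \<le> 0" using assms(2) by (simp add: mult_le_0_iff)
  then show ?thesis by simp
qed

lemma sym_mat:
  fixes A :: "real^'n^'n"
  assumes "transpose A = A"
  shows "x \<bullet> (A *v y) = y \<bullet> (A *v x)"
proof -
  have "x \<bullet> (A *v y) = (x v* A) \<bullet> y" by (simp add: dot_lmul_matrix)
  also have "\<dots> = (transpose A *v x) \<bullet> y" by (simp add: transpose_matrix_vector)
  also have "\<dots> = y \<bullet> (A *v x)" using assms by (simp add: inner_commute)
  finally show ?thesis .
qed

lemma min_eigen:
  fixes A :: "real^'n^'n"
  assumes sym: "transpose A = A"
  shows "\<exists>x0 m. norm x0 = 1 \<and> A *v x0 = m *\<^sub>R x0 \<and> (\<forall>y. m * (norm y)^2 \<le> y \<bullet> (A *v y))"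
proof -
  have "compact (sphere (0::real^'n) 1)" by simp
  moreover have "axis undefined 1 \<in> sphere (0::real^'n) 1" by (simp add: norm_axis_1)
  then have "sphere (0::real^'n) 1 \<noteq> {}" by blast
  moreover have "continuous_on (sphere 0 1) (\<lambda>y::real^'n. y \<bullet> (A *v y))"
    using matrix_vector_mul_bounded_linear[of A]
    by (intro continuous_intros linear_continuous_on)
  ultimately obtain x0 where x0: "x0 \<in> sphere 0 1" and mn: "\<forall>y\<in>sphere 0 1. x0 \<bullet> (A *v x0) \<le> y \<bullet> (A *v y)"
    using continuous_attains_inf by blast
  define m where "m = x0 \<bullet> (A *v x0)"
  have n1: "norm x0 = 1" using x0 by simp
  have all: "m * (norm y)^2 \<le> y \<bullet> (A *v y)" for y
  proof (cases "y = 0")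
    case True then show ?thesis by simp
  next
    case False
    define y' where "y' = (1 / norm y) *\<^sub>R y"
    have "y' \<in> sphere 0 1" using False unfolding y'_def by simp
    then have "m \<le> y' \<bullet> (A *v y')" using mn unfolding m_def by blast
    also have "y' \<bullet> (A *v y') = (y \<bullet> (A *v y)) / (norm y)^2"
      unfolding y'_def by (simp add: matrix_vector_mult_scaleR power2_eq_square)
    finally show ?thesis using False by (simp add: field_simps)
  qed
  define z where "z = A *v x0 - m *\<^sub>R x0"
  define c where "c = z \<bullet> (A *v z) - m * (norm z)^2"
  have c0: "c \<ge> 0" using all[of z] unfolding c_def by simp
  have "0 \<le> 2*t*(norm z)^2 + t^2*c" for t
  proof -
    have "m * (norm (x0 + t *\<^sub>R z))^2 \<le> (x0 + t *\<^sub>R z) \<bullet> (A *v (x0 + t *\<^sub>R z))" by (rule all)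
    moreover have "(norm (x0 + t *\<^sub>R z))^2 = 1 + 2*t*(x0 \<bullet> z) + t^2 * (norm z)^2"
    proof -
      have "x0 \<bullet> x0 = 1" using n1 by (metis norm_eq_sqrt_inner real_sqrt_eq_1_iff)
      then show ?thesis by (simp only: power2_norm_eq_inner) (simp add: inner_add_left inner_add_right inner_commute power2_eq_square algebra_simps)
    qed
    moreover have "(x0 + t *\<^sub>R z) \<bullet> (A *v (x0 + t *\<^sub>R z)) = m + 2*t*(z \<bullet> (A *v x0)) + t^2 * (z \<bullet> (A *v z))"
      using sym_mat[OF sym, of x0 z]
      by (simp add: matrix_vector_right_distrib matrix_vector_mult_scaleR inner_add_left inner_add_right m_def power2_eq_square algebra_simps)
    moreover have "z \<bullet> (A *v x0) = (norm z)^2 + m * (x0 \<bullet> z)"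
      unfolding z_def by (simp add: power2_norm_eq_inner inner_diff_left inner_diff_right inner_commute algebra_simps)
    ultimately show ?thesis unfolding c_def by (simp add: algebra_simps)
  qed
  then have "(norm z)^2 = 0" using quad_zero_aux c0 by blast
  then have "A *v x0 = m *\<^sub>R x0" unfolding z_def by simp
  then show ?thesis using n1 all by blast
qed

lemma sym_quad_bounds:
  fixes A :: "real^'n^'n"
  assumes sym: "transpose A = A"
    and ev: "\<forall>c::real. (\<exists>v::real^'n. v \<noteq> 0 \<and> A *v v = c *\<^sub>R v) \<longrightarrow> lo \<le> c \<and> c \<le> hi"
  shows "lo * (norm y)^2 \<le> y \<bullet> (A *v y) \<and> y \<bullet> (A *v y) \<le> hi * (norm y)^2"
proof
  obtain x0 m where x0: "norm x0 = 1" "A *v x0 = m *\<^sub>R x0" "\<forall>y. m * (norm y)^2 \<le> y \<bullet> (A *v y)"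
    using min_eigen[OF sym] by blast
  have "x0 \<noteq> 0" using x0 by auto
  then have "lo \<le> m" using ev x0 by blast
  then have "lo * (norm y)^2 \<le> m * (norm y)^2" by (simp add: mult_right_mono)
  then show "lo * (norm y)^2 \<le> y \<bullet> (A *v y)" using x0 by (meson order_trans)
next
  define B :: "real^'n^'n" where "B = (\<chi> i j. - (A $ i $ j))"
  have Bv: "B *v v = - (A *v v)" for v
    unfolding B_def by (simp add: matrix_vector_mult_def vec_eq_iff sum_negf)
  have symB: "transpose B = B"
    using sym unfolding B_def by (simp add: transpose_def vec_eq_iff)
  obtain x0 m where x0: "norm x0 = 1" "B *v x0 = m *\<^sub>R x0" "\<forall>y. m * (norm y)^2 \<le> y \<bullet> (B *v y)"
    using min_eigen[OF symB] by blast
  have "x0 \<noteq> 0" using x0 by auto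
  moreover have "A *v x0 = (-m) *\<^sub>R x0" using x0(2) Bv[of x0] by (metis minus_minus scaleR_minus_left)
  ultimately have "-m \<le> hi" using ev by blast
  then have "(-m) * (norm y)^2 \<le> hi * (norm y)^2" by (rule mult_right_mono) simp
  moreover have "m * (norm y)^2 \<le> - (y \<bullet> (A *v y))" using x0(3) Bv[of y] by (metis inner_minus_right)
  ultimately show "y \<bullet> (A *v y) \<le> hi * (norm y)^2" by linarith
qed

lemma PiD_at:
  assumes "disjoint_family_on U I" "finite I" "i \<in> I" "x \<in> U i"
  shows "PiD I U v x = v i"
proof -
  have "PiD I U v x = v i * indicator (U i) x + (\<Sum>j\<in>I - {i}. v j * indicator (U j) x)"
    unfolding PiD_def by (rule sum.remove[OF assms(2,3)])
  also have "(\<Sum>j\<in>I - {i}. v j * indicator (U j) x) = 0"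
  proof (rule sum.neutral, rule ballI)
    fix j assume "j \<in> I - {i}"
    then have "U i \<inter> U j = {}" using assms(1,3) unfolding disjoint_family_on_def by auto
    then show "v j * indicator (U j) x = 0" using assms(4) by (auto simp: indicator_def)
  qed
  finally show ?thesis using assms(4) by simp
qed

lemma PiD_in_Omega:
  assumes "disjoint_family_on U I" "finite I" "(\<Union>i\<in>I. U i) = \<Omega>" "x \<in> \<Omega>"
  shows "\<exists>i\<in>I. x \<in> U i \<and> (\<forall>v. PiD I U v x = v i)"
  using assms PiD_at[OF assms(1,2)] by blast

lemma PiD_meas:
  assumes "\<forall>i\<in>I. U i \<in> sets lebesgue"
  shows "PiD I U v \<in> borel_measurable (lebesgue_on \<Omega>)"
proof -
  have "(\<lambda>x. \<Sum>i\<in>I. v i * indicator (U i) x) \<in> borel_measurable (lebesgue_on \<Omega>)"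
  proof (rule borel_measurable_sum)
    fix i assume "i \<in> I"
    then have "indicator (U i) \<in> borel_measurable (lebesgue_on \<Omega>)"
      using assms by (intro measurable_restrict_space1 borel_measurable_indicator) auto
    then show "(\<lambda>x. v i * indicator (U i) x :: real) \<in> borel_measurable (lebesgue_on \<Omega>)"
      by (intro borel_measurable_times) auto
  qed
  then show ?thesis unfolding PiD_def[abs_def] by simp
qed

lemma PiD_bound: "\<bar>PiD I U v x\<bar> \<le> (\<Sum>i\<in>I. \<bar>v i\<bar>)"
proof -
  have "\<bar>PiD I U v x\<bar> \<le> (\<Sum>i\<in>I. \<bar>v i * indicator (U i) x\<bar>)" unfolding PiD_def by (rule sum_abs)
  also have "\<dots> \<le> (\<Sum>i\<in>I. \<bar>v i\<bar>)"
    by (rule sum_mono) (simp add: abs_mult indicator_def)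
  finally show ?thesis .
qed

lemma PiD_sq_integrable:
  assumes "finite_measure (lebesgue_on \<Omega>)" "\<forall>i\<in>I. U i \<in> sets lebesgue"
  shows "integrable (lebesgue_on \<Omega>) (\<lambda>x. (PiD I U v x)^2)"
proof (rule finite_measure.integrable_const_bound[OF assms(1), where B="(\<Sum>i\<in>I. \<bar>v i\<bar>)^2"])
  show "AE x in lebesgue_on \<Omega>. norm ((PiD I U v x)^2) \<le> (\<Sum>i\<in>I. \<bar>v i\<bar>)^2"
  proof (intro AE_I2)
    fix x
    have "\<bar>PiD I U v x\<bar> \<le> \<bar>\<Sum>i\<in>I. \<bar>v i\<bar>\<bar>" using PiD_bound[of I U v x] by simp
    then have "(PiD I U v x)^2 \<le> (\<Sum>i\<in>I. \<bar>v i\<bar>)^2" by (simp only: abs_le_square_iff)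
    then show "norm ((PiD I U v x)^2) \<le> (\<Sum>i\<in>I. \<bar>v i\<bar>)^2" by simp
  qed
  show "(\<lambda>x. (PiD I U v x)^2) \<in> borel_measurable (lebesgue_on \<Omega>)"
    using PiD_meas[OF assms(2)] by measurable
qed

lemma young_basic:
  fixes a b :: real
  assumes "e > 0"
  shows "2 * (a * b) \<le> a^2 / e + e * b^2"
proof -
  have "0 \<le> (a - e*b)^2" by simp
  then have "2 * e * (a * b) \<le> a^2 + e^2 * b^2" by (simp add: power2_eq_square algebra_simps)
  then have "2 * (a * b) \<le> (a^2 + e^2 * b^2) / e" using assms by (simp add: field_simps mult.commute mult.left_commute)
  also have "\<dots> = a^2 / e + e * b^2" using assms by (simp add: field_simps power2_eq_square)
  finally show ?thesis .
qed

lemma inner_bound_sq: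
  fixes f g :: "'b::euclidean_space"
  shows "\<bar>f \<bullet> g\<bar> \<le> (norm f)^2 + (norm g)^2"
proof -
  have "\<bar>f \<bullet> g\<bar> \<le> norm f * norm g" by (rule Cauchy_Schwarz_ineq2)
  moreover have "0 \<le> (norm f - norm g)^2" by simp
  then have "2 * (norm f * norm g) \<le> (norm f)^2 + (norm g)^2" by (simp add: power2_eq_square algebra_simps)
  moreover have "0 \<le> norm f * norm g" by simp
  ultimately show ?thesis by linarith
qed

lemma L2_inner_integrable:
  fixes f g :: "'a::euclidean_space \<Rightarrow> 'b::euclidean_space"
  assumes "L2 \<Omega> f" "L2 \<Omega> g"
  shows "integrable (lebesgue_on \<Omega>) (\<lambda>x. f x \<bullet> g x)"
proof (rule Bochner_Integration.integrable_bound)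
  show "integrable (lebesgue_on \<Omega>) (\<lambda>x. (norm (f x))^2 + (norm (g x))^2)"
    using assms unfolding L2_def by (intro Bochner_Integration.integrable_add) auto
  show "(\<lambda>x. f x \<bullet> g x) \<in> borel_measurable (lebesgue_on \<Omega>)"
    using assms unfolding L2_def by (intro borel_measurable_inner) auto
  show "AE x in lebesgue_on \<Omega>. norm (f x \<bullet> g x) \<le> norm ((norm (f x))^2 + (norm (g x))^2)"
    using inner_bound_sq by (intro AE_I2) (simp add: abs_le_iff)
qed

lemma Grad_expand:
  assumes GD: "is_GD_pc \<Omega> I Ib U Grad Q" and w: "w \<in> XD I Ib"
  shows "AE x in lebesgue_on \<Omega>. Grad w x = (\<Sum>j\<in>I-Ib. w j *\<^sub>R Grad (\<lambda>i. if i = j then 1 else 0) x)"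
proof -
  have fin: "finite (I - Ib)" using GD unfolding is_GD_pc_def by auto
  have lin: "\<And>v w a b. v \<in> XD I Ib \<Longrightarrow> w \<in> XD I Ib \<Longrightarrow>
        AE x in lebesgue_on \<Omega>. Grad (\<lambda>i. a * v i + b * w i) x = a *\<^sub>R Grad v x + b *\<^sub>R Grad w x"
    using GD unfolding is_GD_pc_def by blast
  define e where "e = (\<lambda>j::nat. \<lambda>i::nat. if i = j then (1::real) else 0)"
  define s where "s = (\<lambda>F. \<lambda>i. \<Sum>j\<in>F. w j * e j i)"
  have sXD: "s F \<in> XD I Ib" if "F \<subseteq> I - Ib" for F
    using that unfolding s_def e_def XD_def by (auto intro!: sum.neutral)
  have eXD: "e j \<in> XD I Ib" if "j \<in> I - Ib" for j
    using that unfolding e_def XD_def by auto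
  have main: "AE x in lebesgue_on \<Omega>. Grad (s F) x = (\<Sum>j\<in>F. w j *\<^sub>R Grad (e j) x)"
    if "F \<subseteq> I - Ib" for F
  proof -
    have "finite F" using that fin finite_subset by blast
    then show ?thesis using that
    proof (induction F rule: finite_subset_induct')
      case empty
      have z: "(\<lambda>_. 0::real) \<in> XD I Ib" unfolding XD_def by auto
      have "AE x in lebesgue_on \<Omega>. Grad (\<lambda>i. 0 * (\<lambda>_. 0::real) i + 0 * (\<lambda>_. 0::real) i) x
              = 0 *\<^sub>R Grad (\<lambda>_. 0) x + 0 *\<^sub>R Grad (\<lambda>_. 0) x"
        by (rule lin[OF z z])
      moreover have "s {} = (\<lambda>i. 0 * (\<lambda>_. 0::real) i + 0 * (\<lambda>_. 0::real) i)" unfolding s_def by simp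
      ultimately show ?case by simp
    next
      case (insert a F)
      have F: "F \<subseteq> I - Ib" using insert(3) by auto
      have L: "AE x in lebesgue_on \<Omega>. Grad (\<lambda>i. 1 * s F i + w a * e a i) x = 1 *\<^sub>R Grad (s F) x + w a *\<^sub>R Grad (e a) x"
        by (rule lin[OF sXD[OF F] eXD[OF insert(2)]])
      have seq: "s (insert a F) = (\<lambda>i. 1 * s F i + w a * e a i)"
        unfolding s_def using insert(1,4) by (simp add: add.commute)
      have sumeq: "(\<Sum>j\<in>insert a F. w j *\<^sub>R Grad (e j) x) = w a *\<^sub>R Grad (e a) x + (\<Sum>j\<in>F. w j *\<^sub>R Grad (e j) x)" for x
        using insert(1,4) by simp
      from L insert(5) show ?case
      proof eventually_elim
        case (elim x)
        then show ?case using sumeq[of x] seq by (simp add: add.commute)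
      qed
    qed
  qed
  have "s (I - Ib) = w"
  proof
    fix i
    show "s (I - Ib) i = w i"
    proof (cases "i \<in> I - Ib")
      case True
      then show ?thesis unfolding s_def e_def using fin by (simp add: if_distrib cong: if_cong)
    next
      case False
      then have "w i = 0" using w unfolding XD_def by auto
      moreover have "s (I - Ib) i = 0" unfolding s_def e_def using False by (auto intro!: sum.neutral)
      ultimately show ?thesis by simp
    qed
  qed
  then show ?thesis using main[of "I - Ib"] unfolding e_def by simp
qed

lemma Gram_expand:
  fixes Grad :: "(nat \<Rightarrow> real) \<Rightarrow> 'a::euclidean_space \<Rightarrow> 'b::euclidean_space"
  assumes GD: "is_GD_pc \<Omega> I Ib U Grad Q" and w: "w \<in> XD I Ib"
  shows "(\<integral>x. (norm (Grad w x))^2 \<partial>lebesgue_on \<Omega>) =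
    (\<Sum>j\<in>I-Ib. \<Sum>k\<in>I-Ib. w j * w k *
      (\<integral>x. Grad (\<lambda>i. if i = j then 1 else 0) x \<bullet> Grad (\<lambda>i. if i = k then 1 else 0) x \<partial>lebesgue_on \<Omega>))"
proof -
  define g where "g = (\<lambda>j. Grad (\<lambda>i. if i = j then 1 else 0))"
  have L2g: "L2 \<Omega> (g j)" if "j \<in> I - Ib" for j
  proof -
    have "(\<lambda>i. if i = j then 1 else 0) \<in> XD I Ib" using that unfolding XD_def by auto
    then show ?thesis using GD unfolding is_GD_pc_def g_def by blast
  qed
  have L2w: "L2 \<Omega> (Grad w)" using GD w unfolding is_GD_pc_def by blast
  have "(\<integral>x. (norm (Grad w x))^2 \<partial>lebesgue_on \<Omega>) = (\<integral>x. (norm (\<Sum>j\<in>I-Ib. w j *\<^sub>R g j x))^2 \<partial>lebesgue_on \<Omega>)"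
  proof (rule integral_cong_AE)
    show "(\<lambda>x. (norm (Grad w x))^2) \<in> borel_measurable (lebesgue_on \<Omega>)"
    proof -
      have [measurable]: "Grad w \<in> borel_measurable (lebesgue_on \<Omega>)" using L2w by (simp add: L2_def)
      show ?thesis by measurable
    qed
    have "(\<lambda>x. \<Sum>j\<in>I-Ib. w j *\<^sub>R g j x) \<in> borel_measurable (lebesgue_on \<Omega>)"
      using L2g unfolding L2_def by (intro borel_measurable_sum borel_measurable_scaleR) auto
    then show "(\<lambda>x. (norm (\<Sum>j\<in>I-Ib. w j *\<^sub>R g j x))^2) \<in> borel_measurable (lebesgue_on \<Omega>)"
      by measurable
    show "AE x in lebesgue_on \<Omega>. (norm (Grad w x))^2 = (norm (\<Sum>j\<in>I-Ib. w j *\<^sub>R g j x))^2"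
      using Grad_expand[OF GD w] unfolding g_def by (rule eventually_mono) simp
  qed
  also have "\<dots> = (\<integral>x. (\<Sum>j\<in>I-Ib. \<Sum>k\<in>I-Ib. w j * w k * (g j x \<bullet> g k x)) \<partial>lebesgue_on \<Omega>)"
    by (simp add: power2_norm_eq_inner inner_sum_left inner_sum_right sum_distrib_left mult.assoc)
      (subst sum.swap, simp add: inner_commute mult.left_commute)
  also have "\<dots> = (\<Sum>j\<in>I-Ib. \<Sum>k\<in>I-Ib. (\<integral>x. w j * w k * (g j x \<bullet> g k x) \<partial>lebesgue_on \<Omega>))"
  proof (subst Bochner_Integration.integral_sum)
    show "\<And>j. j \<in> I - Ib \<Longrightarrow> integrable (lebesgue_on \<Omega>) (\<lambda>x. \<Sum>k\<in>I-Ib. w j * w k * (g j x \<bullet> g k x))"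
      using L2g L2_inner_integrable by (intro Bochner_Integration.integrable_sum Bochner_Integration.integrable_mult_right) blast
    show "(\<Sum>j\<in>I - Ib. \<integral>x. (\<Sum>k\<in>I - Ib. w j * w k * (g j x \<bullet> g k x)) \<partial>lebesgue_on \<Omega>) =
        (\<Sum>j\<in>I - Ib. \<Sum>k\<in>I - Ib. LINT x|lebesgue_on \<Omega>. w j * w k * (g j x \<bullet> g k x))"
      using L2g L2_inner_integrable by (intro sum.cong refl Bochner_Integration.integral_sum Bochner_Integration.integrable_mult_right) blast
  qed
  also have "\<dots> = (\<Sum>j\<in>I-Ib. \<Sum>k\<in>I-Ib. w j * w k * (\<integral>x. g j x \<bullet> g k x \<partial>lebesgue_on \<Omega>))"
    by simp
  finally show ?thesis unfolding g_def .
qed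

lemma qf_coercive:
  fixes J :: "nat set" and G :: "nat \<Rightarrow> nat \<Rightarrow> real"
  assumes fin: "finite J"
    and pos: "\<And>w. (\<forall>i. i \<notin> J \<longrightarrow> w i = 0) \<Longrightarrow> (\<Sum>j\<in>J. (w j)^2) = 1 \<Longrightarrow> 0 < (\<Sum>j\<in>J. \<Sum>k\<in>J. w j * w k * G j k)"
  shows "\<exists>c>0. \<forall>w. c * (\<Sum>j\<in>J. (w j)^2) \<le> (\<Sum>j\<in>J. \<Sum>k\<in>J. w j * w k * G j k)"
proof (cases "J = {}")
  case True then show ?thesis by (intro exI[of _ 1]) simp
next
  case False
  then obtain j0 where j0: "j0 \<in> J" by blast
  define qf where "qf = (\<lambda>w::nat\<Rightarrow>real. \<Sum>j\<in>J. \<Sum>k\<in>J. w j * w k * G j k)"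
  define S where "S = {w::nat\<Rightarrow>real. (\<forall>i. i \<notin> J \<longrightarrow> w i = 0) \<and> (\<Sum>j\<in>J. (w j)^2) = 1}"
  define X where "X = (\<lambda>i::nat. if i \<in> J then {-1..1::real} else {0})"
  have "compactin (product_topology (\<lambda>i. euclidean) UNIV) (PiE UNIV X)"
    unfolding compactin_PiE X_def by simp
  then have cBx: "compact (Pi UNIV X)"
    by (simp add: euclidean_product_topology PiE_UNIV_domain)
  have S_eq: "S = (\<Inter>i\<in>-J. {w. w i = 0}) \<inter> {w. (\<Sum>j\<in>J. (w j)^2) = 1}"
    unfolding S_def by auto
  have "closed S" unfolding S_eq
    by (intro closed_Int closed_INT ballI closed_Collect_eq continuous_intros continuous_on_product_coordinates)
  moreover have "S \<subseteq> Pi UNIV X"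
  proof
    fix w assume w: "w \<in> S"
    show "w \<in> Pi UNIV X"
    proof (rule Pi_I)
      fix i
      show "w i \<in> X i"
      proof (cases "i \<in> J")
        case True
        have "(w i)^2 \<le> (\<Sum>j\<in>J. (w j)^2)" using True fin by (intro member_le_sum) auto
        then have "(w i)^2 \<le> 1" using w unfolding S_def by simp
        then have "\<bar>w i\<bar> \<le> 1" by (simp add: abs_square_le_1)
        then show ?thesis using True unfolding X_def by auto
      next
        case False then show ?thesis using w unfolding S_def X_def by auto
      qed
    qed
  qed
  ultimately have cS: "compact S" using cBx
    by (metis compact_Int_closed inf.absorb_iff2)
  have "(\<Sum>j\<in>J. ((\<lambda>i. if i = j0 then 1 else 0::real) j)^2) = (\<Sum>j\<in>J. if j = j0 then 1 else 0)"
    by (intro sum.cong refl) auto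
  also have "\<dots> = 1" using j0 fin by simp
  finally have "(\<lambda>i. if i = j0 then 1 else 0::real) \<in> S" unfolding S_def using j0 by auto
  then have neS: "S \<noteq> {}" by blast
  have "continuous_on S qf" unfolding qf_def
    by (intro continuous_intros continuous_on_product_coordinates[THEN continuous_on_subset]) auto
  then obtain w0 where w0: "w0 \<in> S" "\<forall>y\<in>S. qf w0 \<le> qf y"
    using continuous_attains_inf[OF cS neS] by blast
  have c0: "qf w0 > 0" using w0(1) pos unfolding S_def qf_def by blast
  have "qf w0 * (\<Sum>j\<in>J. (w j)^2) \<le> qf w" for w
  proof (cases "(\<Sum>j\<in>J. (w j)^2) = 0")
    case True
    then have "\<forall>j\<in>J. w j = 0" using fin by (simp add: sum_nonneg_eq_0_iff)
    then show ?thesis using True unfolding qf_def by simp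
  next
    case False
    define s where "s = (\<Sum>j\<in>J. (w j)^2)"
    have s0: "s > 0" using False unfolding s_def by (simp add: less_le sum_nonneg)
    define w' where "w' = (\<lambda>i. if i \<in> J then w i / sqrt s else 0)"
    have "(\<Sum>j\<in>J. (w' j)^2) = (\<Sum>j\<in>J. (w j)^2 / s)"
      unfolding w'_def using s0 by (intro sum.cong refl) (simp add: power_divide)
    also have "\<dots> = 1" using s0 unfolding s_def by (simp add: sum_divide_distrib[symmetric])
    finally have "w' \<in> S" unfolding S_def w'_def by auto
    then have "qf w0 \<le> qf w'" using w0 by blast
    also have "qf w' = (\<Sum>j\<in>J. \<Sum>k\<in>J. (w j * w k * G j k) / s)"
      unfolding qf_def w'_def using s0
      by (intro sum.cong refl) (simp add: field_simps real_sqrt_mult[symmetric])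
    also have "\<dots> = qf w / s" unfolding qf_def by (simp add: sum_divide_distrib)
    finally show ?thesis using s0 unfolding s_def by (simp add: field_simps)
  qed
  then show ?thesis using c0 unfolding qf_def by blast
qed

lemma PiD_sq_le:
  assumes GD: "is_GD_pc \<Omega> I Ib U Grad Q" and w: "w \<in> XD I Ib" and x: "x \<in> \<Omega>"
  shows "(PiD I U w x)^2 \<le> (\<Sum>j\<in>I-Ib. (w j)^2)"
proof -
  have d: "disjoint_family_on U I" "finite I" "(\<Union>i\<in>I. U i) = \<Omega>" using GD unfolding is_GD_pc_def by auto
  obtain i where i: "i \<in> I" "PiD I U w x = w i" using PiD_in_Omega[OF d x] by blast
  show ?thesis
  proof (cases "i \<in> Ib")
    case True
    then have "w i = 0" using w unfolding XD_def by auto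
    then show ?thesis using i by (simp add: sum_nonneg)
  next
    case False
    then show ?thesis using i d(2) by (intro member_le_sum[THEN order_trans[rotated]]) auto
  qed
qed

lemma CD_bdd:
  fixes Grad :: "(nat \<Rightarrow> real) \<Rightarrow> 'a::euclidean_space \<Rightarrow> 'b::euclidean_space"
  assumes GD: "is_GD_pc \<Omega> I Ib U Grad Q" and fm: "finite_measure (lebesgue_on \<Omega>)"
  shows "bdd_above {L2norm \<Omega> (PiD I U v) / L2norm \<Omega> (Grad v) | v. v \<in> XD I Ib \<and> v \<noteq> (\<lambda>_. 0)}"
proof -
  define J where "J = I - Ib"
  define G where "G = (\<lambda>j k. (\<integral>x. Grad (\<lambda>i. if i = j then 1 else 0) x \<bullet> Grad (\<lambda>i. if i = k then 1 else 0) x \<partial>lebesgue_on \<Omega>))"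
  have finI: "finite I" and sets: "\<forall>i\<in>I. U i \<in> sets lebesgue"
    and nz: "\<forall>v\<in>XD I Ib. L2norm \<Omega> (Grad v) = 0 \<longrightarrow> (\<forall>i. v i = 0)"
    and L2G: "\<forall>v\<in>XD I Ib. L2 \<Omega> (Grad v)"
    using GD unfolding is_GD_pc_def by auto
  have finJ: "finite J" unfolding J_def using finI by simp
  have gram: "(\<integral>x. (norm (Grad w x))^2 \<partial>lebesgue_on \<Omega>) = (\<Sum>j\<in>J. \<Sum>k\<in>J. w j * w k * G j k)"
    if "w \<in> XD I Ib" for w
    using Gram_expand[OF GD that] unfolding J_def G_def by simp
  have int_nonneg: "0 \<le> (\<integral>x. (norm (Grad w x))^2 \<partial>lebesgue_on \<Omega>)" for w
    by (rule integral_nonneg_AE) simp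
  have gpos: "0 < (\<integral>x. (norm (Grad w x))^2 \<partial>lebesgue_on \<Omega>)" if "w \<in> XD I Ib" "\<exists>i. w i \<noteq> 0" for w
  proof -
    have "L2norm \<Omega> (Grad w) \<noteq> 0" using nz that by blast
    then have "(\<integral>x. (norm (Grad w x))^2 \<partial>lebesgue_on \<Omega>) \<noteq> 0" unfolding L2norm_def by auto
    then show ?thesis using int_nonneg[of w] by linarith
  qed
  have "\<exists>c>0. \<forall>w. c * (\<Sum>j\<in>J. (w j)^2) \<le> (\<Sum>j\<in>J. \<Sum>k\<in>J. w j * w k * G j k)"
  proof (rule qf_coercive[OF finJ])
    fix w :: "nat \<Rightarrow> real"
    assume w1: "\<forall>i. i \<notin> J \<longrightarrow> w i = 0" and w2: "(\<Sum>j\<in>J. (w j)^2) = 1"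
    have wX: "w \<in> XD I Ib" using w1 unfolding XD_def J_def by auto
    have "\<exists>i. w i \<noteq> 0" using w2 by (metis (no_types, lifting) power_zero_numeral sum.neutral zero_neq_one)
    then show "0 < (\<Sum>j\<in>J. \<Sum>k\<in>J. w j * w k * G j k)" using gpos[OF wX] gram[OF wX] by simp
  qed
  then obtain c where c: "c > 0" "\<forall>w. c * (\<Sum>j\<in>J. (w j)^2) \<le> (\<Sum>j\<in>J. \<Sum>k\<in>J. w j * w k * G j k)" by blast
  define \<mu> where "\<mu> = measure (lebesgue_on \<Omega>) \<Omega>"
  have "L2norm \<Omega> (PiD I U v) / L2norm \<Omega> (Grad v) \<le> sqrt (\<mu> / c)"
    if v: "v \<in> XD I Ib" "v \<noteq> (\<lambda>_. 0)" for v
  proof -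
    have "(\<integral>x. (norm (PiD I U v x))^2 \<partial>lebesgue_on \<Omega>) \<le> (\<integral>x. (\<Sum>j\<in>J. (v j)^2) \<partial>lebesgue_on \<Omega>)"
    proof (rule integral_mono)
      show "integrable (lebesgue_on \<Omega>) (\<lambda>x. (norm (PiD I U v x))^2)"
        using PiD_sq_integrable[OF fm sets] by simp
      show "integrable (lebesgue_on \<Omega>) (\<lambda>x. \<Sum>j\<in>J. (v j)^2)"
        using fm by (rule finite_measure.integrable_const)
      fix x assume "x \<in> space (lebesgue_on \<Omega>)"
      then have "x \<in> \<Omega>" by simp
      then show "(norm (PiD I U v x))^2 \<le> (\<Sum>j\<in>J. (v j)^2)"
        using PiD_sq_le[OF GD v(1)] unfolding J_def by simp
    qed
    also have "\<dots> = \<mu> * (\<Sum>j\<in>J. (v j)^2)" unfolding \<mu>_def by simp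
    also have "\<dots> \<le> \<mu> * ((\<integral>x. (norm (Grad v x))^2 \<partial>lebesgue_on \<Omega>) / c)"
    proof (rule mult_left_mono)
      show "(\<Sum>j\<in>J. (v j)^2) \<le> (\<integral>x. (norm (Grad v x))^2 \<partial>lebesgue_on \<Omega>) / c"
        using c gram[OF v(1)] by (simp add: field_simps mult.commute)
      show "0 \<le> \<mu>" unfolding \<mu>_def by simp
    qed
    finally have A: "(\<integral>x. (norm (PiD I U v x))^2 \<partial>lebesgue_on \<Omega>) \<le> (\<mu> / c) * (\<integral>x. (norm (Grad v x))^2 \<partial>lebesgue_on \<Omega>)"
      by simp
    have "\<exists>i. v i \<noteq> 0" using v(2) by auto
    then have gp: "0 < (\<integral>x. (norm (Grad v x))^2 \<partial>lebesgue_on \<Omega>)" using gpos v(1) by blast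
    have "L2norm \<Omega> (PiD I U v) \<le> sqrt (\<mu> / c) * L2norm \<Omega> (Grad v)"
      unfolding L2norm_def using A by (simp add: real_sqrt_mult[symmetric])
    then show ?thesis using gp unfolding L2norm_def by (simp add: divide_le_eq)
  qed
  then show ?thesis unfolding bdd_above_def by blast
qed

lemma mono_prod_nonneg:
  fixes \<beta> \<zeta> :: "real \<Rightarrow> real"
  assumes "mono \<beta>" "\<beta> 0 = 0" "mono \<zeta>" "\<zeta> 0 = 0"
  shows "0 \<le> \<beta> s * \<zeta> s"
proof (cases "s \<ge> 0")
  case True
  then have "\<beta> 0 \<le> \<beta> s" "\<zeta> 0 \<le> \<zeta> s" using monoD[OF assms(1)] monoD[OF assms(3)] by auto
  then show ?thesis using assms by simp
next
  case False
  then have "\<beta> s \<le> \<beta> 0" "\<zeta> s \<le> \<zeta> 0" using monoD[OF assms(1), of s 0] monoD[OF assms(3), of s 0] by auto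
  then show ?thesis using assms by (simp add: mult_nonpos_nonpos)
qed

lemma combine_est:
  fixes lam cc N P A2 B2 :: real
  assumes "lam > 0" "cc \<ge> 0" "N \<ge> 0" "P \<le> cc * N"
    and "lam * N \<le> (A2 + B2) / (2 * (lam / (cc+1))) + (lam / (cc+1)) * (P + N) / 2"
  shows "N \<le> (A2 + B2) * (cc + 1) / lam^2"
proof -
  have "(lam / (cc+1)) * (P + N) / 2 \<le> (lam / (cc+1)) * ((cc+1) * N) / 2"
    using assms by (intro divide_right_mono mult_left_mono) (auto simp: algebra_simps)
  also have "\<dots> = lam * N / 2" using assms by (simp add: field_simps)
  finally have "lam * N / 2 \<le> (A2 + B2) / (2 * (lam / (cc+1)))" using assms(5) by linarith
  also have "\<dots> = (A2 + B2) * (cc+1) / (2 * lam)" using assms by (simp add: field_simps)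
  finally have "lam * N * lam \<le> (A2 + B2) * (cc+1)" using assms by (simp add: field_simps)
  then show ?thesis using assms by (simp add: field_simps power2_eq_square)
qed

lemma sqrt_bound:
  fixes X D t :: real
  assumes "0 \<le> t" "X \<le> D * t^2"
  shows "sqrt X \<le> sqrt D * t"
proof -
  have "sqrt X \<le> sqrt (D * t^2)" using assms by simp
  also have "\<dots> = sqrt D * t" using assms by (simp add: real_sqrt_mult)
  finally show ?thesis .
qed

lemma L2_PiD:
  assumes "finite_measure (lebesgue_on \<Omega>)" "\<forall>i\<in>I. U i \<in> sets lebesgue"
  shows "L2 \<Omega> (PiD I U v)"
  unfolding L2_def using PiD_meas[OF assms(2)] PiD_sq_integrable[OF assms] by simp



lemma zeta_sq:
  fixes z s M0 M1 :: real
  assumes "M0 > 0" "\<bar>z\<bar> \<ge> M0 * \<bar>s\<bar> - M1"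
  shows "s^2 \<le> 2 / M0^2 * (z^2 + M1^2)"
proof -
  have h: "0 \<le> M0 * \<bar>s\<bar>" using assms by simp
  then have "(M0 * \<bar>s\<bar>)^2 \<le> (\<bar>z\<bar> + M1)^2" using assms by (intro power_mono) auto
  also have "\<dots> \<le> 2 * (z^2 + M1^2)"
  proof -
    have "0 \<le> (\<bar>z\<bar> - M1)^2" by simp
    then show ?thesis by (simp add: power2_eq_square algebra_simps)
  qed
  finally have "M0^2 * s^2 \<le> 2 * (z^2 + M1^2)" by (simp add: power_mult_distrib)
  then show ?thesis using assms by (simp add: field_simps)
qed

lemma beta_sq:
  fixes b s K0 K1 :: real
  assumes "\<bar>b\<bar> \<le> K0 * \<bar>s\<bar> + K1"
  shows "b^2 \<le> 2 * K0^2 * s^2 + 2 * K1^2"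
proof -
  have "b^2 = \<bar>b\<bar>^2" by simp
  also have "\<dots> \<le> (K0 * \<bar>s\<bar> + K1)^2" using assms by (intro power_mono) auto
  also have "\<dots> \<le> 2 * K0^2 * s^2 + 2 * K1^2"
  proof -
    have "0 \<le> (K0 * \<bar>s\<bar> - K1)^2" by simp
    then show ?thesis by (simp add: power2_eq_square algebra_simps)
  qed
  finally show ?thesis .
qed

lemma core:
  fixes \<Omega> :: "(real^'n) set"
    and \<zeta> \<beta> :: "real \<Rightarrow> real" and \<Lambda> :: "real^'n \<Rightarrow> real^'n^'n"
    and f :: "real^'n \<Rightarrow> real" and F :: "real^'n \<Rightarrow> real^'n"
    and I Ib :: "nat set" and U :: "nat \<Rightarrow> (real^'n) set"
    and Grad :: "(nat \<Rightarrow> real) \<Rightarrow> real^'n \<Rightarrow> real^'n"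
    and Q :: "(real^'n \<Rightarrow> real) \<Rightarrow> (real^'n \<Rightarrow> real)" and u :: "nat \<Rightarrow> real"
  assumes fm: "finite_measure (lebesgue_on \<Omega>)"
    and lam: "lam_lo > 0" and M0: "M0 > 0"
    and zm: "mono \<zeta>" "\<zeta> 0 = 0" "\<forall>s. \<bar>\<zeta> s\<bar> \<ge> M0 * \<bar>s\<bar> - M1"
    and bm: "mono \<beta>" "\<beta> 0 = 0" "\<forall>s. \<bar>\<beta> s\<bar> \<le> K0 * \<bar>s\<bar> + K1"
    and Lm: "\<Lambda> \<in> borel_measurable (lebesgue_on \<Omega>)"
    and Lev: "AE x in lebesgue_on \<Omega>. transpose (\<Lambda> x) = \<Lambda> x
        \<and> (\<forall>c::real. (\<exists>v::real^'n. v \<noteq> 0 \<and> \<Lambda> x *v v = c *\<^sub>R v) \<longrightarrow> lam_lo \<le> c \<and> c \<le> lam_hi)"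
    and fF: "L2 \<Omega> f" "L2 \<Omega> F"
    and GD: "is_GD_pc \<Omega> I Ib U Grad Q" and CDb: "CD \<Omega> I Ib U Grad \<le> Cbar"
    and GS: "solves_GS \<Omega> I Ib U Grad Q \<beta> \<zeta> \<Lambda> f F u"
  defines "t \<equiv> L2norm \<Omega> (Q f) + L2norm \<Omega> F + 1"
    and "\<mu> \<equiv> measure (lebesgue_on \<Omega>) \<Omega>"
    and "D1 \<equiv> (Cbar^2 + 1) / lam_lo^2"
  shows "L2norm \<Omega> (Grad (\<zeta> \<circ> u)) \<le> sqrt D1 * t"
    and "L2norm \<Omega> (PiD I U u) \<le> sqrt (2 * (Cbar^2 * D1 + M1^2 * \<mu>) / M0^2) * t"
    and "L2norm \<Omega> (PiD I U (\<beta> \<circ> u)) \<le> sqrt (2 * K0^2 * (2 * (Cbar^2 * D1 + M1^2 * \<mu>) / M0^2) + 2 * K1^2 * \<mu>) * t"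
proof -
  define D2 where "D2 = 2 * (Cbar^2 * D1 + M1^2 * \<mu>) / M0^2"
  define v where "v = \<zeta> \<circ> u"
  have finI: "finite I" and sets: "\<forall>i\<in>I. U i \<in> sets lebesgue"
    and disj: "disjoint_family_on U I" and un: "(\<Union>i\<in>I. U i) = \<Omega>"
    and nz: "\<forall>v\<in>XD I Ib. L2norm \<Omega> (Grad v) = 0 \<longrightarrow> (\<forall>i. v i = 0)"
    and L2G: "\<forall>v\<in>XD I Ib. L2 \<Omega> (Grad v)"
    and L2Q: "\<forall>g. L2 \<Omega> g \<longrightarrow> L2 \<Omega> (Q g)"
    using GD unfolding is_GD_pc_def by auto
  have uX: "u \<in> XD I Ib" and GSv: "\<forall>v\<in>XD I Ib.
        (\<integral>x. \<beta> (PiD I U u x) * PiD I U v x \<partial>lebesgue_on \<Omega>)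
      + (\<integral>x. (\<Lambda> x *v Grad (\<zeta> \<circ> u) x) \<bullet> Grad v x \<partial>lebesgue_on \<Omega>)
      = (\<integral>x. Q f x * PiD I U v x \<partial>lebesgue_on \<Omega>)
      - (\<integral>x. F x \<bullet> Grad v x \<partial>lebesgue_on \<Omega>)"
    using GS unfolding solves_GS_def by auto
  have vX: "v \<in> XD I Ib" using uX zm(2) unfolding XD_def v_def by auto
  have L2Gv: "L2 \<Omega> (Grad v)" using L2G vX by blast
  have L2Qf: "L2 \<Omega> (Q f)" using L2Q fF by blast
  have L2Pv: "L2 \<Omega> (PiD I U v)" by (rule L2_PiD[OF fm sets])
  have pt: "\<exists>i\<in>I. x \<in> U i \<and> (\<forall>w. PiD I U w x = w i)" if "x \<in> \<Omega>" for x
    using PiD_in_Omega[OF disj finI un that] .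
  define N where "N = (\<integral>x. (norm (Grad v x))^2 \<partial>lebesgue_on \<Omega>)"
  define P where "P = (\<integral>x. (PiD I U v x)^2 \<partial>lebesgue_on \<Omega>)"
  define A2 where "A2 = (\<integral>x. (Q f x)^2 \<partial>lebesgue_on \<Omega>)"
  define B2 where "B2 = (\<integral>x. (norm (F x))^2 \<partial>lebesgue_on \<Omega>)"
  have N0: "N \<ge> 0" unfolding N_def by (rule integral_nonneg_AE) simp
  have P0: "P \<ge> 0" unfolding P_def by (rule integral_nonneg_AE) simp
  have A20: "A2 \<ge> 0" unfolding A2_def by (rule integral_nonneg_AE) simp
  have B20: "B2 \<ge> 0" unfolding B2_def by (rule integral_nonneg_AE) simp
  have iN: "integrable (lebesgue_on \<Omega>) (\<lambda>x. (norm (Grad v x))^2)" using L2Gv unfolding L2_def by simp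
  have iP: "integrable (lebesgue_on \<Omega>) (\<lambda>x. (PiD I U v x)^2)" using L2Pv unfolding L2_def by simp
  have iA: "integrable (lebesgue_on \<Omega>) (\<lambda>x. (Q f x)^2)" using L2Qf unfolding L2_def by simp
  have iB: "integrable (lebesgue_on \<Omega>) (\<lambda>x. (norm (F x))^2)" using fF unfolding L2_def by simp
  define T1 where "T1 = (\<integral>x. \<beta> (PiD I U u x) * PiD I U v x \<partial>lebesgue_on \<Omega>)"
  define T2 where "T2 = (\<integral>x. (\<Lambda> x *v Grad v x) \<bullet> Grad v x \<partial>lebesgue_on \<Omega>)"
  define T3 where "T3 = (\<integral>x. Q f x * PiD I U v x \<partial>lebesgue_on \<Omega>)"
  define T4 where "T4 = (\<integral>x. F x \<bullet> Grad v x \<partial>lebesgue_on \<Omega>)"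
  have eq: "T1 + T2 = T3 - T4" using bspec[OF GSv vX] unfolding T1_def T2_def T3_def T4_def v_def by simp
  have T1: "T1 \<ge> 0" unfolding T1_def
  proof (rule integral_nonneg_AE, rule AE_I2)
    fix x assume "x \<in> space (lebesgue_on \<Omega>)"
    then obtain i where "\<forall>w. PiD I U w x = w i" using pt by auto
    then show "0 \<le> \<beta> (PiD I U u x) * PiD I U v x"
      unfolding v_def using mono_prod_nonneg[OF bm(1,2) zm(1,2)] by simp
  qed
  have quad: "AE x in lebesgue_on \<Omega>. lam_lo * (norm (Grad v x))^2 \<le> (\<Lambda> x *v Grad v x) \<bullet> Grad v x
       \<and> (\<Lambda> x *v Grad v x) \<bullet> Grad v x \<le> lam_hi * (norm (Grad v x))^2"
    using Lev
  proof (rule eventually_mono)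
    fix x assume H: "transpose (\<Lambda> x) = \<Lambda> x
        \<and> (\<forall>c::real. (\<exists>v::real^'n. v \<noteq> 0 \<and> \<Lambda> x *v v = c *\<^sub>R v) \<longrightarrow> lam_lo \<le> c \<and> c \<le> lam_hi)"
    show "lam_lo * (norm (Grad v x))^2 \<le> (\<Lambda> x *v Grad v x) \<bullet> Grad v x
       \<and> (\<Lambda> x *v Grad v x) \<bullet> Grad v x \<le> lam_hi * (norm (Grad v x))^2"
      using sym_quad_bounds[OF conjunct1[OF H] conjunct2[OF H], of "Grad v x"]
      by (simp only: inner_commute[of "\<Lambda> x *v Grad v x"])
  qed
  have iT2: "integrable (lebesgue_on \<Omega>) (\<lambda>x. (\<Lambda> x *v Grad v x) \<bullet> Grad v x)"
  proof (rule Bochner_Integration.integrable_bound)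
    show "integrable (lebesgue_on \<Omega>) (\<lambda>x. lam_hi * (norm (Grad v x))^2)"
      using iN by simp
    have [measurable]: "Grad v \<in> borel_measurable (lebesgue_on \<Omega>)" using L2Gv unfolding L2_def by simp
    have c: "continuous_on UNIV (\<lambda>p::(real^'n^'n) \<times> (real^'n). (fst p *v snd p) \<bullet> snd p)"
      unfolding matrix_vector_mult_def by (intro continuous_intros)
    show "(\<lambda>x. (\<Lambda> x *v Grad v x) \<bullet> Grad v x) \<in> borel_measurable (lebesgue_on \<Omega>)"
      using borel_measurable_continuous_Pair[OF Lm _ c, of "Grad v"] by simp
    show "AE x in lebesgue_on \<Omega>. norm ((\<Lambda> x *v Grad v x) \<bullet> Grad v x) \<le> norm (lam_hi * (norm (Grad v x))^2)"
      using quad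
    proof (rule eventually_mono)
      fix x assume "lam_lo * (norm (Grad v x))^2 \<le> (\<Lambda> x *v Grad v x) \<bullet> Grad v x
       \<and> (\<Lambda> x *v Grad v x) \<bullet> Grad v x \<le> lam_hi * (norm (Grad v x))^2"
      moreover have "0 \<le> lam_lo * (norm (Grad v x))^2" using lam by simp
      ultimately show "norm ((\<Lambda> x *v Grad v x) \<bullet> Grad v x) \<le> norm (lam_hi * (norm (Grad v x))^2)"
        by auto
    qed
  qed
  have T2: "lam_lo * N \<le> T2" unfolding T2_def N_def
  proof -
    have "lam_lo * (\<integral>x. (norm (Grad v x))^2 \<partial>lebesgue_on \<Omega>) = (\<integral>x. lam_lo * (norm (Grad v x))^2 \<partial>lebesgue_on \<Omega>)"
      by simp
    also have "\<dots> \<le> (\<integral>x. (\<Lambda> x *v Grad v x) \<bullet> Grad v x \<partial>lebesgue_on \<Omega>)"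
      using iN iT2 quad by (intro integral_mono_AE) (auto elim: eventually_mono)
    finally show "lam_lo * (\<integral>x. (norm (Grad v x))^2 \<partial>lebesgue_on \<Omega>) \<le> (\<integral>x. (\<Lambda> x *v Grad v x) \<bullet> Grad v x \<partial>lebesgue_on \<Omega>)" .
  qed
  define e where "e = lam_lo / (Cbar^2 + 1)"
  have c1: "0 < Cbar^2 + 1" using zero_le_power2[of Cbar] by linarith
  have e0: "e > 0" unfolding e_def using lam c1 by simp
  have T3: "T3 \<le> (A2 / e + e * P) / 2"
  proof -
    have iT3: "integrable (lebesgue_on \<Omega>) (\<lambda>x. Q f x * PiD I U v x)"
      using L2_inner_integrable[OF L2Qf L2Pv] by (simp add: inner_real_def)
    have "T3 \<le> (\<integral>x. ((Q f x)^2 / e + e * (PiD I U v x)^2) / 2 \<partial>lebesgue_on \<Omega>)"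
      unfolding T3_def
    proof (rule integral_mono)
      show "integrable (lebesgue_on \<Omega>) (\<lambda>x. ((Q f x)^2 / e + e * (PiD I U v x)^2) / 2)"
        using iA iP by (intro Bochner_Integration.integrable_divide Bochner_Integration.integrable_add
            Bochner_Integration.integrable_mult_right) auto
      show "integrable (lebesgue_on \<Omega>) (\<lambda>x. Q f x * PiD I U v x)" by (rule iT3)
      fix x show "Q f x * PiD I U v x \<le> ((Q f x)^2 / e + e * (PiD I U v x)^2) / 2"
        using young_basic[OF e0, of "Q f x" "PiD I U v x"] by simp
    qed
    also have "\<dots> = (A2 / e + e * P) / 2"
      unfolding A2_def P_def using iA iP by (simp add: Bochner_Integration.integral_add)
    finally show ?thesis .
  qed
  have T4: "- T4 \<le> (B2 / e + e * N) / 2"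
  proof -
    have iT4: "integrable (lebesgue_on \<Omega>) (\<lambda>x. F x \<bullet> Grad v x)"
      using L2_inner_integrable[OF fF(2) L2Gv] .
    have "- T4 = (\<integral>x. - (F x \<bullet> Grad v x) \<partial>lebesgue_on \<Omega>)" unfolding T4_def by simp
    also have "\<dots> \<le> (\<integral>x. ((norm (F x))^2 / e + e * (norm (Grad v x))^2) / 2 \<partial>lebesgue_on \<Omega>)"
    proof (rule integral_mono)
      show "integrable (lebesgue_on \<Omega>) (\<lambda>x. ((norm (F x))^2 / e + e * (norm (Grad v x))^2) / 2)"
        using iB iN by (intro Bochner_Integration.integrable_divide Bochner_Integration.integrable_add
            Bochner_Integration.integrable_mult_right) auto
      show "integrable (lebesgue_on \<Omega>) (\<lambda>x. - (F x \<bullet> Grad v x))" using iT4 by simp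
      fix x
      have "- (F x \<bullet> Grad v x) \<le> norm (F x) * norm (Grad v x)"
        using Cauchy_Schwarz_ineq2[of "F x" "Grad v x"] by linarith
      also have "\<dots> \<le> ((norm (F x))^2 / e + e * (norm (Grad v x))^2) / 2"
        using young_basic[OF e0, of "norm (F x)" "norm (Grad v x)"] by simp
      finally show "- (F x \<bullet> Grad v x) \<le> ((norm (F x))^2 / e + e * (norm (Grad v x))^2) / 2" .
    qed
    also have "\<dots> = (B2 / e + e * N) / 2"
      unfolding B2_def N_def using iB iN by (simp add: Bochner_Integration.integral_add)
    finally show ?thesis .
  qed
  have PN: "P \<le> Cbar^2 * N"
  proof (cases "v = (\<lambda>_. 0)")
    case True
    then have "P = 0" unfolding P_def PiD_def by simp
    then show ?thesis using N0 by simp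
  next
    case False
    let ?S = "{L2norm \<Omega> (PiD I U v) / L2norm \<Omega> (Grad v) | v. v \<in> XD I Ib \<and> v \<noteq> (\<lambda>_. 0)}"
    have "L2norm \<Omega> (PiD I U v) / L2norm \<Omega> (Grad v) \<in> ?S" using vX False by blast
    then have "L2norm \<Omega> (PiD I U v) / L2norm \<Omega> (Grad v) \<le> Sup ?S"
      using CD_bdd[OF GD fm] by (rule cSup_upper)
    also have "Sup ?S \<le> Cbar" using CDb unfolding CD_def .
    finally have r: "L2norm \<Omega> (PiD I U v) / L2norm \<Omega> (Grad v) \<le> Cbar" .
    have "\<exists>i. v i \<noteq> 0" using False by auto
    then have "L2norm \<Omega> (Grad v) \<noteq> 0" using nz vX by blast
    moreover have "L2norm \<Omega> (Grad v) \<ge> 0" unfolding L2norm_def by simp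
    ultimately have gp: "L2norm \<Omega> (Grad v) > 0" by linarith
    have lp: "sqrt P \<le> Cbar * sqrt N"
      using r gp unfolding L2norm_def P_def N_def by (simp add: divide_le_eq)
    have "(sqrt P)^2 \<le> (Cbar * sqrt N)^2" using lp P0 by (intro power_mono) auto
    then show ?thesis using P0 N0 by (simp add: power_mult_distrib)
  qed
  have "lam_lo * N \<le> (A2 + B2) / (2 * (lam_lo / (Cbar^2+1))) + (lam_lo / (Cbar^2+1)) * (P + N) / 2"
  proof -
    have "lam_lo * N \<le> T1 + T2" using T1 T2 by linarith
    also have "\<dots> \<le> (A2 / e + e * P) / 2 + (B2 / e + e * N) / 2" using eq T3 T4 by linarith
    also have "\<dots> = (A2 + B2) / (2 * e) + e * (P + N) / 2" using e0 by (simp add: field_simps)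
    finally show ?thesis unfolding e_def .
  qed
  then have N1: "N \<le> (A2 + B2) * (Cbar^2 + 1) / lam_lo^2"
    using combine_est[OF lam _ N0 PN] by simp
  define a where "a = L2norm \<Omega> (Q f)"
  define b where "b = L2norm \<Omega> F"
  have a: "a \<ge> 0" "a^2 = A2" unfolding a_def A2_def L2norm_def using A20 unfolding A2_def by auto
  have b: "b \<ge> 0" "b^2 = B2" unfolding b_def B2_def L2norm_def using B20 unfolding B2_def by auto
  have t: "t = a + b + 1" unfolding t_def a_def b_def ..
  have t1: "t \<ge> 1" "t \<ge> 0" using a b t by auto
  have tt: "1 \<le> t^2" using t1 by (simp add: one_le_power)
  have abt: "A2 + B2 \<le> t^2" using a b unfolding t by (simp add: power2_eq_square algebra_simps)
  have D10: "D1 \<ge> 0" unfolding D1_def by simp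
  have ND: "N \<le> D1 * t^2"
  proof -
    have "N \<le> (A2 + B2) * D1" using N1 unfolding D1_def by simp
    also have "\<dots> \<le> t^2 * D1" using abt D10 by (intro mult_right_mono)
    finally show ?thesis by (simp add: mult.commute)
  qed
  have \<mu>0: "\<mu> \<ge> 0" unfolding \<mu>_def by simp
  show "L2norm \<Omega> (Grad (\<zeta> \<circ> u)) \<le> sqrt D1 * t"
    using sqrt_bound[OF t1(2) ND] unfolding L2norm_def N_def v_def .
  define IU where "IU = (\<integral>x. (PiD I U u x)^2 \<partial>lebesgue_on \<Omega>)"
  have IU: "IU \<le> 2 / M0^2 * (P + M1^2 * \<mu>)"
  proof -
    have "IU \<le> (\<integral>x. 2 / M0^2 * ((PiD I U v x)^2 + M1^2) \<partial>lebesgue_on \<Omega>)"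
      unfolding IU_def
    proof (rule integral_mono)
      show "integrable (lebesgue_on \<Omega>) (\<lambda>x. (PiD I U u x)^2)" by (rule PiD_sq_integrable[OF fm sets])
      show "integrable (lebesgue_on \<Omega>) (\<lambda>x. 2 / M0^2 * ((PiD I U v x)^2 + M1^2))"
        using iP fm by (intro Bochner_Integration.integrable_add Bochner_Integration.integrable_mult_right
            finite_measure.integrable_const) auto
      fix x assume "x \<in> space (lebesgue_on \<Omega>)"
      then obtain i where "\<forall>w. PiD I U w x = w i" using pt by auto
      then show "(PiD I U u x)^2 \<le> 2 / M0^2 * ((PiD I U v x)^2 + M1^2)"
        unfolding v_def using zeta_sq[OF M0] zm(3) by simp
    qed
    also have "\<dots> = 2 / M0^2 * (P + M1^2 * \<mu>)"
      unfolding P_def \<mu>_def using iP fm by (simp add: Bochner_Integration.integral_add finite_measure.integrable_const)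
    finally show ?thesis .
  qed
  have IUD: "IU \<le> D2 * t^2"
  proof -
    have "P + M1^2 * \<mu> \<le> Cbar^2 * (D1 * t^2) + M1^2 * \<mu> * t^2"
    proof -
      have "P \<le> Cbar^2 * (D1 * t^2)" using PN ND by (meson order_trans mult_left_mono zero_le_power2)
      moreover have "M1^2 * \<mu> \<le> M1^2 * \<mu> * t^2" using mult_left_mono[OF tt, of "M1^2 * \<mu>"] \<mu>0 by simp
      ultimately show ?thesis by linarith
    qed
    then have "2 / M0^2 * (P + M1^2 * \<mu>) \<le> 2 / M0^2 * ((Cbar^2 * D1 + M1^2 * \<mu>) * t^2)"
      by (intro mult_left_mono) (auto simp: algebra_simps)
    then show ?thesis using IU unfolding D2_def by (simp add: field_simps)
  qed
  show "L2norm \<Omega> (PiD I U u) \<le> sqrt (2 * (Cbar^2 * D1 + M1^2 * \<mu>) / M0^2) * t"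
    using sqrt_bound[OF t1(2) IUD] unfolding L2norm_def IU_def D2_def by simp
  define IB where "IB = (\<integral>x. (PiD I U (\<beta> \<circ> u) x)^2 \<partial>lebesgue_on \<Omega>)"
  have IB: "IB \<le> 2 * K0^2 * IU + 2 * K1^2 * \<mu>"
  proof -
    have "IB \<le> (\<integral>x. 2 * K0^2 * (PiD I U u x)^2 + 2 * K1^2 \<partial>lebesgue_on \<Omega>)"
      unfolding IB_def
    proof (rule integral_mono)
      show "integrable (lebesgue_on \<Omega>) (\<lambda>x. (PiD I U (\<beta> \<circ> u) x)^2)" by (rule PiD_sq_integrable[OF fm sets])
      show "integrable (lebesgue_on \<Omega>) (\<lambda>x. 2 * K0^2 * (PiD I U u x)^2 + 2 * K1^2)"
        using PiD_sq_integrable[OF fm sets, of u] fm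
        by (intro Bochner_Integration.integrable_add Bochner_Integration.integrable_mult_right
            finite_measure.integrable_const) auto
      fix x assume "x \<in> space (lebesgue_on \<Omega>)"
      then obtain i where "\<forall>w. PiD I U w x = w i" using pt by auto
      then show "(PiD I U (\<beta> \<circ> u) x)^2 \<le> 2 * K0^2 * (PiD I U u x)^2 + 2 * K1^2"
        using beta_sq bm(3) by simp
    qed
    also have "\<dots> = 2 * K0^2 * IU + 2 * K1^2 * \<mu>"
      unfolding IU_def \<mu>_def using PiD_sq_integrable[OF fm sets, of u] fm
      by (simp add: Bochner_Integration.integral_add finite_measure.integrable_const)
    finally show ?thesis .
  qed
  have IBD: "IB \<le> (2 * K0^2 * D2 + 2 * K1^2 * \<mu>) * t^2"
  proof -
    have "2 * K0^2 * IU \<le> 2 * K0^2 * (D2 * t^2)" using IUD by (intro mult_left_mono) auto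
    moreover have "2 * K1^2 * \<mu> \<le> 2 * K1^2 * \<mu> * t^2" using mult_left_mono[OF tt, of "2 * K1^2 * \<mu>"] \<mu>0 by simp
    ultimately show ?thesis using IB by (simp add: algebra_simps)
  qed
  show "L2norm \<Omega> (PiD I U (\<beta> \<circ> u)) \<le> sqrt (2 * K0^2 * (2 * (Cbar^2 * D1 + M1^2 * \<mu>) / M0^2) + 2 * K1^2 * \<mu>) * t"
    using sqrt_bound[OF t1(2) IBD] unfolding L2norm_def IB_def D2_def by simp
qed

theorem mainTheorem1:
  fixes \<Omega> :: "(real^'n) set"
    and M0 M1 K0 K1 lam_lo lam_hi Cbar :: real
  assumes "open \<Omega>" and "bounded \<Omega>" and "connected \<Omega>"
    and "M0 > 0" and "M1 > 0" and "K0 > 0" and "K1 > 0"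
    and "lam_lo > 0" and "lam_hi \<ge> lam_lo"
  shows "\<exists>C>0. \<forall>(\<zeta>::real \<Rightarrow> real) (\<beta>::real \<Rightarrow> real) (\<Lambda>::real^'n \<Rightarrow> real^'n^'n)
            (f::real^'n \<Rightarrow> real) (F::real^'n \<Rightarrow> real^'n)
            (I::nat set) (Ib::nat set) (U::nat \<Rightarrow> (real^'n) set)
            (Grad::(nat \<Rightarrow> real) \<Rightarrow> real^'n \<Rightarrow> real^'n)
            (Q::(real^'n \<Rightarrow> real) \<Rightarrow> (real^'n \<Rightarrow> real)) (u::nat \<Rightarrow> real).
     continuous_on UNIV \<zeta> \<and> mono \<zeta> \<and> \<zeta> 0 = 0 \<and> (\<forall>s. \<bar>\<zeta> s\<bar> \<ge> M0 * \<bar>s\<bar> - M1)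
   \<and> continuous_on UNIV \<beta> \<and> mono \<beta> \<and> \<beta> 0 = 0 \<and> (\<forall>s. \<bar>\<beta> s\<bar> \<le> K0 * \<bar>s\<bar> + K1)
   \<and> strict_mono (\<lambda>s. \<beta> s + \<zeta> s)
   \<and> \<Lambda> \<in> borel_measurable (lebesgue_on \<Omega>)
   \<and> (AE x in lebesgue_on \<Omega>. transpose (\<Lambda> x) = \<Lambda> x
        \<and> (\<forall>c::real. (\<exists>v::real^'n. v \<noteq> 0 \<and> \<Lambda> x *v v = c *\<^sub>R v) \<longrightarrow> lam_lo \<le> c \<and> c \<le> lam_hi))
   \<and> L2 \<Omega> f \<and> L2 \<Omega> F
   \<and> is_GD_pc \<Omega> I Ib U Grad Q
   \<and> CD \<Omega> I Ib U Grad \<le> Cbar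
   \<and> solves_GS \<Omega> I Ib U Grad Q \<beta> \<zeta> \<Lambda> f F u
   \<longrightarrow> L2norm \<Omega> (PiD I U u) + L2norm \<Omega> (PiD I U (\<beta> \<circ> u)) + L2norm \<Omega> (Grad (\<zeta> \<circ> u))
       \<le> C * (L2norm \<Omega> (Q f) + L2norm \<Omega> F + 1)"
  proof -
  have lm: "\<Omega> \<in> lmeasurable" using lmeasurable_open assms(1,2) by blast
  have fm: "finite_measure (lebesgue_on \<Omega>)" by (rule finite_measure_lebesgue_on[OF lm])
  define \<mu> where "\<mu> = measure (lebesgue_on \<Omega>) \<Omega>"
  define D1 where "D1 = (Cbar^2 + 1) / lam_lo^2"
  define D2 where "D2 = 2 * (Cbar^2 * D1 + M1^2 * \<mu>) / M0^2"
  define D3 where "D3 = 2 * K0^2 * D2 + 2 * K1^2 * \<mu>"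
  define C where "C = sqrt D1 + sqrt D2 + sqrt D3 + 1"
  have \<mu>0: "\<mu> \<ge> 0" unfolding \<mu>_def by simp
  have D1: "D1 \<ge> 0" unfolding D1_def by simp
  have D2: "D2 \<ge> 0" unfolding D2_def using D1 \<mu>0 by simp
  have D3: "D3 \<ge> 0" unfolding D3_def using D2 \<mu>0 by simp
  have C0: "C > 0" unfolding C_def using D1 D2 D3 by (simp add: add_nonneg_pos)
  show ?thesis
  proof (intro exI[of _ C] conjI C0 allI impI)
    fix \<zeta> \<beta> :: "real \<Rightarrow> real" and \<Lambda> :: "real^'n \<Rightarrow> real^'n^'n"
      and f :: "real^'n \<Rightarrow> real" and F :: "real^'n \<Rightarrow> real^'n"
      and I Ib :: "nat set" and U :: "nat \<Rightarrow> (real^'n) set"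
      and Grad :: "(nat \<Rightarrow> real) \<Rightarrow> real^'n \<Rightarrow> real^'n"
      and Q :: "(real^'n \<Rightarrow> real) \<Rightarrow> (real^'n \<Rightarrow> real)" and u :: "nat \<Rightarrow> real"
    assume H: "continuous_on UNIV \<zeta> \<and> mono \<zeta> \<and> \<zeta> 0 = 0 \<and> (\<forall>s. \<bar>\<zeta> s\<bar> \<ge> M0 * \<bar>s\<bar> - M1)
   \<and> continuous_on UNIV \<beta> \<and> mono \<beta> \<and> \<beta> 0 = 0 \<and> (\<forall>s. \<bar>\<beta> s\<bar> \<le> K0 * \<bar>s\<bar> + K1)
   \<and> strict_mono (\<lambda>s. \<beta> s + \<zeta> s)
   \<and> \<Lambda> \<in> borel_measurable (lebesgue_on \<Omega>)
   \<and> (AE x in lebesgue_on \<Omega>. transpose (\<Lambda> x) = \<Lambda> x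
        \<and> (\<forall>c::real. (\<exists>v::real^'n. v \<noteq> 0 \<and> \<Lambda> x *v v = c *\<^sub>R v) \<longrightarrow> lam_lo \<le> c \<and> c \<le> lam_hi))
   \<and> L2 \<Omega> f \<and> L2 \<Omega> F
   \<and> is_GD_pc \<Omega> I Ib U Grad Q
   \<and> CD \<Omega> I Ib U Grad \<le> Cbar
   \<and> solves_GS \<Omega> I Ib U Grad Q \<beta> \<zeta> \<Lambda> f F u"
    define t where "t = L2norm \<Omega> (Q f) + L2norm \<Omega> F + 1"
    have t0: "t \<ge> 0" unfolding t_def L2norm_def by simp
    have e1: "L2norm \<Omega> (Grad (\<zeta> \<circ> u)) \<le> sqrt D1 * t"
      and e2: "L2norm \<Omega> (PiD I U u) \<le> sqrt D2 * t"
      and e3: "L2norm \<Omega> (PiD I U (\<beta> \<circ> u)) \<le> sqrt D3 * t"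
      using core[OF fm assms(8,4), of \<zeta> M1 \<beta> K0 K1 \<Lambda> lam_hi f F I Ib U Grad Q Cbar u] H
      unfolding t_def \<mu>_def D1_def D2_def D3_def by blast+
    have "L2norm \<Omega> (PiD I U u) + L2norm \<Omega> (PiD I U (\<beta> \<circ> u)) + L2norm \<Omega> (Grad (\<zeta> \<circ> u))
        \<le> (sqrt D1 + sqrt D2 + sqrt D3) * t" using e1 e2 e3 by (simp add: algebra_simps)
    also have "\<dots> \<le> C * t" unfolding C_def using t0 by (simp add: algebra_simps)
    finally show "L2norm \<Omega> (PiD I U u) + L2norm \<Omega> (PiD I U (\<beta> \<circ> u)) + L2norm \<Omega> (Grad (\<zeta> \<circ> u))
       \<le> C * (L2norm \<Omega> (Q f) + L2norm \<Omega> F + 1)" unfolding t_def .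
  qed
qed

end
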